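(* Let $G=(V,E,C,\ell)$ be an edge-labeled hypergraph with $C=\{1,\dots,k\}$, and consider the linear program \[ \min \sum_{e\in E} x_e \quad\text{s.t.}\quad \sum_{c=1}^k x_v^c=k-1\ \ \forall v\in V;\qquad x_v^c\le x_e\ \ \forall c\in C,\ \forall e\in E \text{ with } \ell(e)=c,\ \forall v\in e;\qquad 0\le x_v^c\le 1,\ 0\le x_e\le 1. \] Let $(x_v^c,x_e)$ be an optimal solution of this LP. For each $c\in C$ let $S_c=\{v\in V: x_v^c<1/2\}$, set $Y[i]=c$ for every $i\in S_c$, and assign every node lying in no $S_c$ to an arbitrary category. Then $Y$ is a well-defined clustering and $\mathrm{CatEdgeClus}(Y)\le 2\min_{Y':V\to C}\mathrm{CatEdgeClus}(Y')$.
   Context: An edge-labeled hypergraph $G=(V,E,C,\ell)$ consists of a finite node set $V$, a finite collection $E$ of hyperedges (nonempty subsets of $V$), a finite set $C$ of categories, and a labeling $\ell:E\to C$. A clustering is a map $Y:V\to C$. For $e\in E$, $m_Y(e)=1$ if $Y[i]\neq\ell(e)$ for some $i\in e$, and $m_Y(e)=0$ otherwise; $\mathrm{CatEdgeClus}(Y)=\sum_{e\in E}m_Y(e)$. *)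

theory Defs
  imports Complex_Main
begin

text \<open>Edge-labeled hypergraph: nodes V, hyperedges indexed by a finite set E of edge
  identifiers (so repeated hyperedges are allowed), edge e is the node set of hyperedge e,
  categories C = {1..k}, labeling lab.\<close>

definition edge_labeled_hypergraph ::
  "'v set \<Rightarrow> 'e set \<Rightarrow> ('e \<Rightarrow> 'v set) \<Rightarrow> nat \<Rightarrow> ('e \<Rightarrow> nat) \<Rightarrow> bool" where
  "edge_labeled_hypergraph V E edge k lab \<longleftrightarrow>
     finite V \<and> finite E \<and>
     (\<forall>e\<in>E. edge e \<noteq> {} \<and> edge e \<subseteq> V) \<and>
     (\<forall>e\<in>E. lab e \<in> {1..k})"

definition mistake :: "('e \<Rightarrow> 'v set) \<Rightarrow> ('e \<Rightarrow> nat) \<Rightarrow> ('v \<Rightarrow> nat) \<Rightarrow> 'e \<Rightarrow> nat" where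
  "mistake edge lab Y e = (if \<exists>i\<in>edge e. Y i \<noteq> lab e then 1 else 0)"

definition CatEdgeClus :: "'e set \<Rightarrow> ('e \<Rightarrow> 'v set) \<Rightarrow> ('e \<Rightarrow> nat) \<Rightarrow> ('v \<Rightarrow> nat) \<Rightarrow> nat" where
  "CatEdgeClus E edge lab Y = (\<Sum>e\<in>E. mistake edge lab Y e)"

definition lp_feasible ::
  "'v set \<Rightarrow> 'e set \<Rightarrow> ('e \<Rightarrow> 'v set) \<Rightarrow> nat \<Rightarrow> ('e \<Rightarrow> nat)
   \<Rightarrow> ('v \<Rightarrow> nat \<Rightarrow> real) \<Rightarrow> ('e \<Rightarrow> real) \<Rightarrow> bool" where
  "lp_feasible V E edge k lab xv xe \<longleftrightarrow>
     (\<forall>v\<in>V. (\<Sum>c=1..k. xv v c) = real k - 1) \<and>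
     (\<forall>c\<in>{1..k}. \<forall>e\<in>E. lab e = c \<longrightarrow> (\<forall>v\<in>edge e. xv v c \<le> xe e)) \<and>
     (\<forall>v\<in>V. \<forall>c\<in>{1..k}. 0 \<le> xv v c \<and> xv v c \<le> 1) \<and>
     (\<forall>e\<in>E. 0 \<le> xe e \<and> xe e \<le> 1)"

definition lp_optimal ::
  "'v set \<Rightarrow> 'e set \<Rightarrow> ('e \<Rightarrow> 'v set) \<Rightarrow> nat \<Rightarrow> ('e \<Rightarrow> nat)
   \<Rightarrow> ('v \<Rightarrow> nat \<Rightarrow> real) \<Rightarrow> ('e \<Rightarrow> real) \<Rightarrow> bool" where
  "lp_optimal V E edge k lab xv xe \<longleftrightarrow>
     lp_feasible V E edge k lab xv xe \<and>
     (\<forall>yv ye. lp_feasible V E edge k lab yv ye \<longrightarrow> (\<Sum>e\<in>E. xe e) \<le> (\<Sum>e\<in>E. ye e))"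

definition S_set :: "'v set \<Rightarrow> ('v \<Rightarrow> nat \<Rightarrow> real) \<Rightarrow> nat \<Rightarrow> 'v set" where
  "S_set V xv c = {v\<in>V. xv v c < 1/2}"

definition rounded_clustering ::
  "'v set \<Rightarrow> nat \<Rightarrow> ('v \<Rightarrow> nat \<Rightarrow> real) \<Rightarrow> ('v \<Rightarrow> nat) \<Rightarrow> bool" where
  "rounded_clustering V k xv Y \<longleftrightarrow>
     (\<forall>v\<in>V. Y v \<in> {1..k}) \<and>
     (\<forall>c\<in>{1..k}. \<forall>v\<in>S_set V xv c. Y v = c)"

end

theory Submission
  imports Defs
begin

lemma sum_indic:
  assumes "y \<in> {1..k::nat}"
  shows "(\<Sum>c=1..k. (if y = c then 0 else 1::real)) = real k - 1"
proof -
  have "(\<Sum>c=1..k. (if y = c then 0 else 1::real)) = (\<Sum>c\<in>{1..k} - {y}. 1)"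
    by (rule sum.mono_neutral_cong_right) (use assms in auto)
  also have "\<dots> = real k - 1" using assms by (simp add: of_nat_diff)
  finally show ?thesis .
qed

theorem mainTheorem5:
  fixes V :: "'v set" and E :: "'e set" and edge :: "'e \<Rightarrow> 'v set"
    and k :: nat and lab :: "'e \<Rightarrow> nat"
    and xv :: "'v \<Rightarrow> nat \<Rightarrow> real" and xe :: "'e \<Rightarrow> real"
  assumes "edge_labeled_hypergraph V E edge k lab"
    and "lp_optimal V E edge k lab xv xe"
  shows "(\<forall>c\<in>{1..k}. \<forall>c'\<in>{1..k}. c \<noteq> c' \<longrightarrow> S_set V xv c \<inter> S_set V xv c' = {})
    \<and> (\<forall>Y. rounded_clustering V k xv Y \<longrightarrow>
          (\<forall>Y'. (\<forall>v\<in>V. Y' v \<in> {1..k}) \<longrightarrow>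
             CatEdgeClus E edge lab Y \<le> 2 * CatEdgeClus E edge lab Y'))"
proof
  have H: "finite V" "finite E" "\<And>e. e\<in>E \<Longrightarrow> edge e \<subseteq> V" "\<And>e. e\<in>E \<Longrightarrow> lab e \<in> {1..k}"
    using assms(1) unfolding edge_labeled_hypergraph_def by auto
  have F: "lp_feasible V E edge k lab xv xe" using assms(2) unfolding lp_optimal_def by auto
  have sumv: "\<And>v. v\<in>V \<Longrightarrow> (\<Sum>c=1..k. xv v c) = real k - 1"
    and cons: "\<And>e v. e\<in>E \<Longrightarrow> v \<in> edge e \<Longrightarrow> lab e \<in> {1..k} \<Longrightarrow> xv v (lab e) \<le> xe e"
    and bnd: "\<And>v c. v\<in>V \<Longrightarrow> c\<in>{1..k} \<Longrightarrow> 0 \<le> xv v c \<and> xv v c \<le> 1"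
    and bnde: "\<And>e. e\<in>E \<Longrightarrow> 0 \<le> xe e \<and> xe e \<le> 1"
    using F unfolding lp_feasible_def by auto
  show "\<forall>c\<in>{1..k}. \<forall>c'\<in>{1..k}. c \<noteq> c' \<longrightarrow> S_set V xv c \<inter> S_set V xv c' = {}"
  proof (intro ballI impI)
    fix c c' assume c: "c \<in> {1..k}" "c' \<in> {1..k}" "c \<noteq> c'"
    show "S_set V xv c \<inter> S_set V xv c' = {}"
    proof (rule ccontr)
      assume "S_set V xv c \<inter> S_set V xv c' \<noteq> {}"
      then obtain v where v: "v \<in> V" "xv v c < 1/2" "xv v c' < 1/2"
        unfolding S_set_def by auto
      have fin: "finite ({1..k} - {c,c'})" by simp
      have "(\<Sum>d=1..k. xv v d) = (\<Sum>d\<in>{c,c'}. xv v d) + (\<Sum>d\<in>{1..k}-{c,c'}. xv v d)"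
      proof -
        have "{c,c'} \<subseteq> {1..k}" using c by auto
        from sum.subset_diff[OF this finite_atLeastAtMost, of "xv v"] show ?thesis by simp
      qed
      also have "(\<Sum>d\<in>{c,c'}. xv v d) = xv v c + xv v c'" using c by simp
      also have "(\<Sum>d\<in>{1..k}-{c,c'}. xv v d) \<le> (\<Sum>d\<in>{1..k}-{c,c'}. 1)"
        by (rule sum_mono) (use bnd v in auto)
      also have "(\<Sum>d\<in>{1..k}-{c,c'}. (1::real)) = real k - 2"
        using c by (simp add: card_Diff_subset of_nat_diff)
      finally show False using v sumv[OF v(1)] by linarith
    qed
  qed
  show "\<forall>Y. rounded_clustering V k xv Y \<longrightarrow>
          (\<forall>Y'. (\<forall>v\<in>V. Y' v \<in> {1..k}) \<longrightarrow>
             CatEdgeClus E edge lab Y \<le> 2 * CatEdgeClus E edge lab Y')"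
  proof (intro allI impI)
    fix Y Y' :: "'v \<Rightarrow> nat"
    assume R: "rounded_clustering V k xv Y" and Y': "\<forall>v\<in>V. Y' v \<in> {1..k}"
    have RS: "\<And>c v. c\<in>{1..k} \<Longrightarrow> v \<in> V \<Longrightarrow> xv v c < 1/2 \<Longrightarrow> Y v = c"
      using R unfolding rounded_clustering_def S_set_def by auto
    have step1: "real (mistake edge lab Y e) \<le> 2 * xe e" if e: "e \<in> E" for e
    proof (cases "\<exists>i\<in>edge e. Y i \<noteq> lab e")
      case True
      then obtain i where i: "i \<in> edge e" "Y i \<noteq> lab e" by auto
      have "i \<in> V" using H(3)[OF e] i by auto
      hence "xv i (lab e) \<ge> 1/2" using RS[OF H(4)[OF e]] i by force
      moreover have "xv i (lab e) \<le> xe e" using cons[OF e i(1) H(4)[OF e]] .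
      ultimately show ?thesis using True unfolding mistake_def by simp
    next
      case False
      thus ?thesis using bnde[OF e] unfolding mistake_def by simp
    qed
    define yv where "yv = (\<lambda>v c. if Y' v = c then 0 else (1::real))"
    define ye where "ye = (\<lambda>e. real (mistake edge lab Y' e))"
    have "lp_feasible V E edge k lab yv ye"
      unfolding lp_feasible_def
    proof (intro conjI ballI impI)
      fix v assume "v \<in> V"
      thus "(\<Sum>c=1..k. yv v c) = real k - 1" using Y' sum_indic unfolding yv_def by blast
    next
      fix c e v assume "c \<in> {1..k}" "e \<in> E" "lab e = c" "v \<in> edge e"
      thus "yv v c \<le> ye e" unfolding yv_def ye_def mistake_def by auto
    qed (auto simp: yv_def ye_def mistake_def)
    hence opt: "(\<Sum>e\<in>E. xe e) \<le> (\<Sum>e\<in>E. ye e)" using assms(2) unfolding lp_optimal_def by blast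
    have "real (CatEdgeClus E edge lab Y) = (\<Sum>e\<in>E. real (mistake edge lab Y e))"
      unfolding CatEdgeClus_def by simp
    also have "\<dots> \<le> (\<Sum>e\<in>E. 2 * xe e)" by (rule sum_mono) (rule step1)
    also have "\<dots> = 2 * (\<Sum>e\<in>E. xe e)" by (simp add: sum_distrib_left)
    also have "\<dots> \<le> 2 * (\<Sum>e\<in>E. ye e)" using opt by simp
    also have "\<dots> = real (2 * CatEdgeClus E edge lab Y')"
      unfolding CatEdgeClus_def ye_def by simp
    finally show "CatEdgeClus E edge lab Y \<le> 2 * CatEdgeClus E edge lab Y'" by linarith
  qed
qed

end
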